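(* Let $n\ge 4$ and let $G$ be a graph having the maximum value of $cM_2$ among all connected graphs of order $n$. Then the maximum degree of $G$ is $n-1$.
   Context: All graphs are finite and simple. For a graph $G$ and a vertex $u$, $d_u(G)$ denotes the degree of $u$ in $G$. The complementary second Zagreb index of $G$ is $cM_2(G)=\sum_{uv\in E(G)}\left|(d_u(G))^2-(d_v(G))^2\right|$. *)

theory Defs
  imports Main
begin

definition simple_graph :: "'a set \<Rightarrow> 'a set set \<Rightarrow> bool" where
  "simple_graph V E \<longleftrightarrow> finite V \<and>
     (\<forall>e\<in>E. \<exists>u v. e = {u, v} \<and> u \<noteq> v \<and> u \<in> V \<and> v \<in> V)"

definition degree :: "'a set set \<Rightarrow> 'a \<Rightarrow> nat" where
  "degree E u = card {e\<in>E. u \<in> e}"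

definition adj :: "'a set set \<Rightarrow> 'a \<Rightarrow> 'a \<Rightarrow> bool" where
  "adj E u v \<longleftrightarrow> {u, v} \<in> E"

definition is_walk :: "'a set set \<Rightarrow> 'a list \<Rightarrow> bool" where
  "is_walk E xs \<longleftrightarrow> xs \<noteq> [] \<and> (\<forall>i. Suc i < length xs \<longrightarrow> adj E (xs ! i) (xs ! Suc i))"

definition connected_graph :: "'a set \<Rightarrow> 'a set set \<Rightarrow> bool" where
  "connected_graph V E \<longleftrightarrow> V \<noteq> {} \<and>
     (\<forall>u\<in>V. \<forall>v\<in>V. \<exists>xs. is_walk E xs \<and> hd xs = u \<and> last xs = v)"

(* complementary second Zagreb index: sum over edges uv of |d_u^2 - d_v^2| *)
definition cM2 :: "'a set set \<Rightarrow> nat" where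
  "cM2 E = (\<Sum>e\<in>E. Max {(degree E u)^2 - (degree E v)^2 | u v. e = {u, v}})"

definition max_degree :: "'a set \<Rightarrow> 'a set set \<Rightarrow> nat" where
  "max_degree V E = Max (degree E ` V)"

end

theory Submission imports Defs begin

lemma Max_pair:
  fixes h :: "'a \<Rightarrow> nat"
  shows "Max {h x - h y | x y. {a,b} = {x,y}} = nat \<bar>int (h a) - int (h b)\<bar>"
proof -
  have "{h x - h y | x y. {a,b} = {x,y}} = {h a - h b, h b - h a}"
    by (auto simp: doubleton_eq_iff)
  then show ?thesis by auto
qed

lemma wt_pair: "Max {(degree E x)^2 - (degree E y)^2 | x y. {a,b} = {x,y}}
   = nat \<bar>int (degree E a)^2 - int (degree E b)^2\<bar>"
  using Max_pair[of "\<lambda>x. (degree E x)^2" a b] by simp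

lemma sg_edge: "simple_graph V E \<Longrightarrow> e \<in> E \<Longrightarrow> \<exists>a b. e = {a,b} \<and> a \<noteq> b \<and> a \<in> V \<and> b \<in> V"
  unfolding simple_graph_def by blast


lemma sg_sub: "simple_graph V E \<Longrightarrow> e \<in> E \<Longrightarrow> e \<subseteq> V"
  using sg_edge by fastforce

lemma sg_finite_E: "simple_graph V E \<Longrightarrow> finite E"
proof -
  assume s: "simple_graph V E"
  then have "E \<subseteq> Pow V" using sg_sub by blast
  moreover have "finite (Pow V)" using s unfolding simple_graph_def by simp
  ultimately show ?thesis using finite_subset by blast
qed

lemma degree_le:
  assumes s: "simple_graph V E" and x: "x \<in> V"
  shows "degree E x \<le> card V - 1"
proof -
  have fin: "finite V" using s unfolding simple_graph_def by simp
  have "{e\<in>E. x \<in> e} \<subseteq> (\<lambda>y. {x,y}) ` (V - {x})"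
  proof
    fix e assume "e \<in> {e\<in>E. x \<in> e}"
    then obtain a b where e: "e = {a,b}" "a \<noteq> b" "a \<in> V" "b \<in> V" "x \<in> e"
      using sg_edge[OF s] by blast
    show "e \<in> (\<lambda>y. {x,y}) ` (V - {x})"
    proof (cases "x = a")
      case True
      then show ?thesis using e by (intro image_eqI[of _ _ b]) auto
    next
      case False
      then have "x = b" using e by simp
      then show ?thesis using e by (intro image_eqI[of _ _ a]) auto
    qed
  qed
  then have "degree E x \<le> card ((\<lambda>y. {x,y}) ` (V - {x}))"
    unfolding degree_def using fin by (simp add: card_mono)
  also have "\<dots> \<le> card (V - {x})" by (rule card_image_le) (use fin in simp)
  also have "\<dots> = card V - 1" using x fin by simp
  finally show ?thesis .
qed

lemma degree_full:
  assumes s: "simple_graph V E" and x: "x \<in> V"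
    and all: "\<forall>w\<in>V. w \<noteq> x \<longrightarrow> {x,w} \<in> E"
  shows "degree E x \<ge> card V - 1"
proof -
  have fin: "finite V" using s unfolding simple_graph_def by simp
  have "card (V - {x}) \<le> card {e\<in>E. x \<in> e}"
  proof (rule card_inj_on_le[where f="\<lambda>y. {x,y}"])
    show "inj_on (\<lambda>y. {x,y}) (V - {x})" by (rule inj_onI) (auto simp: doubleton_eq_iff)
    show "(\<lambda>y. {x,y}) ` (V - {x}) \<subseteq> {e\<in>E. x \<in> e}" using all by blast
    show "finite {e\<in>E. x \<in> e}" using sg_finite_E[OF s] by simp
  qed
  then show ?thesis using x fin unfolding degree_def by simp
qed

lemma transfer:
  fixes f :: "'a \<Rightarrow> 'b"
  assumes s: "simple_graph V E" and inj: "inj_on f V" and c: "connected_graph V E"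
  shows "simple_graph (f ` V) ((`) f ` E)" "card (f ` V) = card V"
    "connected_graph (f ` V) ((`) f ` E)" "cM2 ((`) f ` E) = cM2 E"
proof -
  show "simple_graph (f ` V) ((`) f ` E)"
    unfolding simple_graph_def
  proof (intro conjI ballI)
    show "finite (f ` V)" using s unfolding simple_graph_def by simp
  next
    fix e' assume "e' \<in> (`) f ` E"
    then obtain e where e: "e \<in> E" "e' = f ` e" by blast
    then obtain a b where ab: "e = {a,b}" "a \<noteq> b" "a \<in> V" "b \<in> V" using sg_edge[OF s] by blast
    have "f a \<noteq> f b" using ab inj by (simp add: inj_on_eq_iff)
    then show "\<exists>u v. e' = {u, v} \<and> u \<noteq> v \<and> u \<in> f ` V \<and> v \<in> f ` V"
      using ab e by blast
  qed
  show "card (f ` V) = card V" using inj by (simp add: card_image)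
  have adjf: "adj E a b \<Longrightarrow> adj ((`) f ` E) (f a) (f b)" for a b
  proof -
    assume "adj E a b"
    then have "f ` {a,b} \<in> (`) f ` E" unfolding adj_def by (rule imageI)
    then show ?thesis unfolding adj_def by simp
  qed
  show "connected_graph (f ` V) ((`) f ` E)"
    unfolding connected_graph_def
  proof (intro conjI ballI)
    show "f ` V \<noteq> {}" using c unfolding connected_graph_def by simp
  next
    fix u' v' assume "u' \<in> f ` V" "v' \<in> f ` V"
    then obtain u v where uv: "u \<in> V" "v \<in> V" "u' = f u" "v' = f v" by blast
    then obtain xs where xs: "is_walk E xs" "hd xs = u" "last xs = v"
      using c unfolding connected_graph_def by blast
    have "is_walk ((`) f ` E) (map f xs)"
      using xs(1) adjf unfolding is_walk_def by auto
    moreover have "hd (map f xs) = u'" "last (map f xs) = v'"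
      using xs uv unfolding is_walk_def by (auto simp: hd_map last_map)
    ultimately show "\<exists>xs. is_walk ((`) f ` E) xs \<and> hd xs = u' \<and> last xs = v'" by blast
  qed
  have injE: "inj_on ((`) f) E"
  proof (rule inj_onI)
    fix x y assume "x \<in> E" "y \<in> E" "f ` x = f ` y"
    then show "x = y" using inj_on_image_eq_iff[OF inj sg_sub[OF s] sg_sub[OF s]] by blast
  qed
  have degf: "degree ((`) f ` E) (f x) = degree E x" if x: "x \<in> V" for x
  proof -
    have "{e'\<in>(`) f ` E. f x \<in> e'} = (`) f ` {e\<in>E. x \<in> e}"
    proof -
      have "f x \<in> f ` e \<longleftrightarrow> x \<in> e" if "e \<in> E" for e
        using sg_sub[OF s that] x inj by (auto simp: inj_on_eq_iff)
      then show ?thesis by auto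
    qed
    moreover have "inj_on ((`) f) {e\<in>E. x \<in> e}" using injE by (rule inj_on_subset) auto
    ultimately show ?thesis unfolding degree_def by (simp add: card_image)
  qed
  have "cM2 ((`) f ` E) = (\<Sum>e\<in>E. Max {(degree ((`) f ` E) u)^2 - (degree ((`) f ` E) v)^2 | u v. f ` e = {u, v}})"
    unfolding cM2_def by (simp add: sum.reindex[OF injE])
  also have "\<dots> = (\<Sum>e\<in>E. Max {(degree E u)^2 - (degree E v)^2 | u v. e = {u, v}})"
  proof (rule sum.cong[OF refl])
    fix e assume "e \<in> E"
    then obtain a b where e: "e = {a,b}" "a \<in> V" "b \<in> V" using sg_edge[OF s] by blast
    have "f ` e = {f a, f b}" using e by simp
    then show "Max {(degree ((`) f ` E) u)^2 - (degree ((`) f ` E) v)^2 | u v. f ` e = {u, v}} =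
      Max {(degree E u)^2 - (degree E v)^2 | u v. e = {u, v}}"
      using e by (simp only: wt_pair degf)
  qed
  finally show "cM2 ((`) f ` E) = cM2 E" unfolding cM2_def .
qed

lemma L1: "(y::int) \<ge> 0 \<Longrightarrow> y \<le> d \<Longrightarrow> \<bar>(d+1)^2 - y^2\<bar> - \<bar>d^2 - y^2\<bar> = 2*d+1"
proof -
  assume "y \<ge> 0" "y \<le> d"
  then have "y^2 \<le> d^2" by (simp add: power_mono)
  moreover have "(d+1)^2 = d^2 + 2*d + 1" by (simp add: power2_eq_square algebra_simps)
  ultimately show ?thesis using \<open>y \<ge> 0\<close> \<open>y \<le> d\<close> by arith
qed
lemma L2: "(x::int) \<ge> 0 \<Longrightarrow> y \<ge> 0 \<Longrightarrow> \<bar>(x+1)^2 - y^2\<bar> - \<bar>x^2 - y^2\<bar> \<ge> -(2*x+1)"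
proof -
  assume "x \<ge> 0" "y \<ge> 0"
  have "\<bar>(x+1)^2 - y^2\<bar> \<ge> \<bar>x^2 - y^2\<bar> - \<bar>(x+1)^2 - x^2\<bar>" by linarith
  moreover have "\<bar>(x+1)^2 - x^2\<bar> = 2*x+1" using \<open>x \<ge> 0\<close> by (simp add: power2_eq_square algebra_simps)
  ultimately show ?thesis by linarith
qed
lemma L3: "(y::int) \<ge> 0 \<Longrightarrow> y \<le> x \<Longrightarrow> \<bar>(x+1)^2 - y^2\<bar> - \<bar>x^2 - y^2\<bar> \<ge> 0"
  using L1 by fastforce

lemma edge_other: "simple_graph V E \<Longrightarrow> e \<in> E \<Longrightarrow> x \<in> e \<Longrightarrow> \<exists>y. e = {x,y} \<and> y \<noteq> x \<and> y \<in> V"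
  using sg_edge by fastforce

lemma degree_insert:
  assumes "finite E" "{u,w} \<notin> E"
  shows "degree (insert {u,w} E) x = degree E x + (if x = u \<or> x = w then 1 else 0)"
proof (cases "x = u \<or> x = w")
  case True
  then have "{e\<in>insert {u,w} E. x \<in> e} = insert {u,w} {e\<in>E. x \<in> e}" by auto
  then show ?thesis using True assms unfolding degree_def by simp
next
  case False
  then have "{e\<in>insert {u,w} E. x \<in> e} = {e\<in>E. x \<in> e}" by auto
  then show ?thesis using False unfolding degree_def by simp
qed

lemma add_edge:
  assumes s: "simple_graph V E" and c: "connected_graph V E"
    and u: "u \<in> V" and w: "w \<in> V" and uw: "u \<noteq> w" and nE: "{u,w} \<notin> E"
    and umax: "\<forall>x\<in>V. degree E x \<le> degree E u"
  shows "simple_graph V (insert {u,w} E)" "connected_graph V (insert {u,w} E)"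
    "cM2 E < cM2 (insert {u,w} E)"
proof -
  show "simple_graph V (insert {u,w} E)" using s u w uw unfolding simple_graph_def by blast
  have adjm: "adj E a b \<Longrightarrow> adj (insert {u,w} E) a b" for a b unfolding adj_def by simp
  have walkm: "is_walk E xs \<Longrightarrow> is_walk (insert {u,w} E) xs" for xs
    unfolding is_walk_def using adjm by blast
  show "connected_graph V (insert {u,w} E)" using c walkm unfolding connected_graph_def by blast
  define E2 where "E2 = insert {u,w} E"
  define D where "D = degree E"
  define D2 where "D2 = degree E2"
  define d where "d = D u"
  have finE: "finite E" using sg_finite_E[OF s] .
  have D2eq: "D2 x = D x + (if x = u \<or> x = w then 1 else 0)" for x
    unfolding D2_def D_def E2_def using degree_insert[OF finE nE] .
  have dmax: "x \<in> V \<Longrightarrow> D x \<le> d" for x using umax unfolding D_def d_def by auto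
  have d1: "d \<ge> 1"
  proof -
    obtain xs where xs: "is_walk E xs" "hd xs = u" "last xs = w"
      using c u w unfolding connected_graph_def by blast
    have "length xs \<noteq> 1"
    proof
      assume "length xs = 1"
      then have "hd xs = last xs" by (cases xs) auto
      then show False using xs uw by simp
    qed
    moreover have "xs \<noteq> []" using xs unfolding is_walk_def by simp
    ultimately have "Suc 0 < length xs" by (cases xs) auto
    then have "{xs!0, xs!1} \<in> E" using xs unfolding is_walk_def adj_def by auto
    moreover have "xs!0 = u" using xs \<open>xs \<noteq> []\<close> by (simp add: hd_conv_nth)
    ultimately have "{e\<in>E. u \<in> e} \<noteq> {}" by auto
    then have "card {e\<in>E. u \<in> e} \<noteq> 0" using finE by simp
    then show ?thesis unfolding d_def D_def degree_def by simp
  qed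
  define c where "c = (if D w = d then 0 else 2 * int (D w) + 1)"
  define g where "g e = (if u \<in> e then 2 * int d + 1 else 0) - (if w \<in> e then c else 0)" for e :: "'a set"
  define wt where "wt F e = Max {(degree F x)^2 - (degree F y)^2 | x y. e = {x, y}}" for F and e :: "'a set"
  have wtp: "wt F {a,b} = nat \<bar>int (degree F a)^2 - int (degree F b)^2\<bar>" for F a b
    unfolding wt_def by (rule wt_pair)
  have edge: "int (wt E2 e) - int (wt E e) \<ge> g e" if e: "e \<in> E" for e
  proof (cases "u \<in> e")
    case True
    then obtain b where b: "e = {u,b}" "b \<noteq> u" "b \<in> V" using edge_other[OF s e] by blast
    have bw: "b \<noteq> w" using b e nE by auto
    have "w \<notin> e" using b bw uw by auto
    then have ge: "g e = 2 * int d + 1" unfolding g_def using True by simp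
    have "int (wt E2 e) - int (wt E e) = \<bar>(int d+1)^2 - (int (D b))^2\<bar> - \<bar>(int d)^2 - (int (D b))^2\<bar>"
      unfolding b(1) wtp D2_def[symmetric] D_def[symmetric] using D2eq[of u] D2eq[of b] b bw
      by (simp add: d_def add.commute)
    also have "\<dots> = 2 * int d + 1" by (rule L1) (use dmax[OF b(3)] in auto)
    finally show ?thesis using ge by simp
  next
    case False
    show ?thesis
    proof (cases "w \<in> e")
      case True
      then obtain b where b: "e = {w,b}" "b \<noteq> w" "b \<in> V" using edge_other[OF s e] by blast
      have bu: "b \<noteq> u" using b False by auto
      have ge: "g e = - c" unfolding g_def using True False by simp
      have "int (wt E2 e) - int (wt E e) = \<bar>(int (D w)+1)^2 - (int (D b))^2\<bar> - \<bar>(int (D w))^2 - (int (D b))^2\<bar>"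
        unfolding b(1) wtp D2_def[symmetric] D_def[symmetric] using D2eq[of w] D2eq[of b] b bu uw
        by (simp add: add.commute)
      also have "\<dots> \<ge> - c"
      proof (cases "D w = d")
        case True
        then show ?thesis unfolding c_def using L3[of "int (D b)" "int (D w)"] dmax[OF b(3)] by simp
      next
        case False
        then show ?thesis unfolding c_def using L2[of "int (D w)" "int (D b)"] by simp
      qed
      finally show ?thesis using ge by simp
    next
      case True2: False
      obtain a b where ab: "e = {a,b}" "a \<in> V" "b \<in> V" using sg_edge[OF s e] by blast
      have "a \<noteq> u" "b \<noteq> u" "a \<noteq> w" "b \<noteq> w" using ab False True2 by auto
      then have "wt E2 e = wt E e"
        unfolding ab(1) wtp D2_def[symmetric] D_def[symmetric] using D2eq[of a] D2eq[of b] by simp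
      then show ?thesis unfolding g_def using False True2 by simp
    qed
  qed
  have sumg: "(\<Sum>e\<in>E. g e) = (2 * int d + 1) * int d - c * int (D w)"
  proof -
    have "(\<Sum>e\<in>E. g e) = (\<Sum>e\<in>E. if u \<in> e then 2 * int d + 1 else 0) - (\<Sum>e\<in>E. if w \<in> e then c else 0)"
      unfolding g_def by (simp add: sum_subtractf)
    also have "(\<Sum>e\<in>E. if u \<in> e then 2 * int d + 1 else 0) = (\<Sum>e\<in>{e\<in>E. u \<in> e}. 2 * int d + 1)"
      using finE by (simp add: sum.inter_filter[symmetric])
    also have "\<dots> = (2 * int d + 1) * int d" unfolding d_def D_def degree_def by simp
    also have "(\<Sum>e\<in>E. if w \<in> e then c else 0) = (\<Sum>e\<in>{e\<in>E. w \<in> e}. c)"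
      using finE by (simp add: sum.inter_filter[symmetric])
    also have "\<dots> = c * int (D w)" unfolding D_def degree_def by simp
    finally show ?thesis .
  qed
  have pos: "(\<Sum>e\<in>E. g e) > 0"
  proof (cases "D w = d")
    case True
    then show ?thesis unfolding sumg c_def using d1 by simp
  next
    case False
    then have lt: "D w < d" using dmax[OF w] by simp
    have "(2 * int (D w) + 1) * int (D w) < (2 * int d + 1) * int d"
      by (rule mult_strict_mono) (use lt in auto)
    then show ?thesis unfolding sumg c_def using False by (simp add: algebra_simps)
  qed
  have "int (cM2 E) = (\<Sum>e\<in>E. int (wt E e))" unfolding cM2_def wt_def by simp
  also have "\<dots> < (\<Sum>e\<in>E. int (wt E e)) + (\<Sum>e\<in>E. g e)" using pos by simp
  also have "\<dots> = (\<Sum>e\<in>E. int (wt E e) + g e)" by (simp add: sum.distrib)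
  also have "\<dots> \<le> (\<Sum>e\<in>E. int (wt E2 e))" by (rule sum_mono) (use edge in force)
  also have "\<dots> \<le> int (wt E2 {u,w}) + (\<Sum>e\<in>E. int (wt E2 e))" by simp
  also have "\<dots> = int (cM2 E2)" unfolding cM2_def wt_def E2_def using finE nE by simp
  finally show "cM2 E < cM2 (insert {u,w} E)" unfolding E2_def by simp
qed

theorem proposition1:
  fixes n :: nat and V :: "'a set" and E :: "'a set set"
  assumes "n \<ge> 4"
    and "simple_graph V E" and "card V = n" and "connected_graph V E"
    and "\<And>(V' :: nat set) E'. simple_graph V' E' \<Longrightarrow> card V' = n \<Longrightarrow>
           connected_graph V' E' \<Longrightarrow> cM2 E' \<le> cM2 E"
  shows "max_degree V E = n - 1"
proof -
  note s = assms(2) and c = assms(4) and opt = assms(5)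
  have fin: "finite V" using s unfolding simple_graph_def by simp
  have ne: "V \<noteq> {}" using c unfolding connected_graph_def by simp
  have "Max (degree E ` V) \<in> degree E ` V" using fin ne by (intro Max_in) auto
  then obtain u where u: "u \<in> V" "degree E u = Max (degree E ` V)" by auto
  have umax: "\<forall>x\<in>V. degree E x \<le> degree E u" using u fin by simp
  have le: "degree E u \<le> n - 1" using degree_le[OF s u(1)] assms(3) by simp
  show ?thesis
  proof (cases "\<forall>w\<in>V. w \<noteq> u \<longrightarrow> {u,w} \<in> E")
    case True
    then have "degree E u \<ge> n - 1" using degree_full[OF s u(1)] assms(3) by simp
    then show ?thesis unfolding max_degree_def using u le by simp
  next
    case False
    then obtain w where w: "w \<in> V" "w \<noteq> u" "{u,w} \<notin> E" by blast
    note A = add_edge[OF s c u(1) w(1) w(2)[symmetric] w(3) umax]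
    obtain h where h: "bij_betw h V {0..<card V}" using ex_bij_betw_finite_nat[OF fin] by blast
    then have inj: "inj_on h V" by (simp add: bij_betw_def)
    note T = transfer[OF A(1) inj A(2)]
    have "cM2 ((`) h ` insert {u,w} E) \<le> cM2 E"
      by (rule opt) (use T assms(3) in auto)
    then show ?thesis using T(4) A(3) by simp
  qed
qed

end
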